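(* Suppose a social choice function $f$ is rationalizably implemented by a mechanism $\mathcal{M}$. Then for all $\theta,\theta'\in\Theta$: if $S_i^{\mathcal{M},\theta}\subseteq S_i^{\mathcal{M},\theta'}$ for every $i\in\mathcal{I}$, then $S_i^{\mathcal{M},\theta}=S_i^{\mathcal{M},\theta'}$ for every $i\in\mathcal{I}$.
   Context: Setting: $\mathcal{I}$ is a finite set of agents with $|\mathcal{I}|\ge3$; $\Theta$ is a finite set of states; $Z$ is a countable set of pure outcomes; $Y=\Delta(Z)$ is the set of lotteries on $Z$, each $z\in Z$ identified with the degenerate lottery. Each agent $i$ has at each state $\theta$ a utility $u_i(\cdot,\theta):Z\to\mathbb{R}$, extended to $Y$ by expected utility. An SCF is a map $f:\Theta\to Z$ (assumed with $|f(\Theta)|\ge2$). A mechanism is $\mathcal{M}=\langle M=\times_iM_i,\ g:M\to Y\rangle$ with each $M_i$ countable. For state $\theta$ and profile $S=(S_i)_i$, $S_i\subseteq M_i$, $b_i^{\mathcal{M},\theta}(S)$ is the set of $m_i\in M_i$ for which there is a probability distribution $\lambda_{-i}$ on $M_{-i}$ supported in $S_{-i}=\times_{j\ne i}S_j$ with $m_i\in\arg\max_{m_i'\in M_i}\sum_{m_{-i}}\lambda_{-i}(m_{-i})u_i(g(m_i',m_{-i}),\theta)$. $S^{\mathcal{M},\theta}=(S_i^{\mathcal{M},\theta})_i$ is the largest fixed point of the monotone operator $b^{\mathcal{M},\theta}=(b_i^{\mathcal{M},\theta})_i$ with respect to componentwise inclusion, identified with the product $\times_iS_i^{\mathcal{M},\theta}$.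 $f$ is rationalizably implemented by $\mathcal{M}$ if $g(S^{\mathcal{M},\theta})=\{f(\theta)\}$ for every $\theta\in\Theta$. *)

theory Defs
  imports "HOL-Probability.Probability"
begin

text \<open>Pure outcomes: a countable type 'z;
  lotteries are 'z pmf (a pure outcome z is identified with return_pmf z).\<close>

definition EU :: "('i \<Rightarrow> 'z \<Rightarrow> 's \<Rightarrow> real) \<Rightarrow> 's \<Rightarrow> 'i \<Rightarrow> 'z pmf \<Rightarrow> real" where
  "EU u \<theta> i y = measure_pmf.expectation y (\<lambda>z. u i z \<theta>)"

text \<open>Expected utility of agent i sending x against the belief lam over the other agents'
  messages (lam is a distribution on profiles; its i-th component is ignored).\<close>
definition exp_payoff ::
  "(('i \<Rightarrow> 'm) \<Rightarrow> 'z pmf) \<Rightarrow> ('i \<Rightarrow> 'z \<Rightarrow> 's \<Rightarrow> real) \<Rightarrow> 's \<Rightarrow> 'i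
     \<Rightarrow> ('i \<Rightarrow> 'm) pmf \<Rightarrow> 'm \<Rightarrow> real" where
  "exp_payoff g u \<theta> i lam x = measure_pmf.expectation lam (\<lambda>m. EU u \<theta> i (g (m(i := x))))"

definition best_resp ::
  "('i \<Rightarrow> 'm set) \<Rightarrow> (('i \<Rightarrow> 'm) \<Rightarrow> 'z pmf) \<Rightarrow> ('i \<Rightarrow> 'z \<Rightarrow> 's \<Rightarrow> real) \<Rightarrow> 's
     \<Rightarrow> ('i \<Rightarrow> 'm set) \<Rightarrow> 'i \<Rightarrow> 'm set" where
  "best_resp M g u \<theta> S i =
     {x \<in> M i. \<exists>lam :: ('i \<Rightarrow> 'm) pmf.
        set_pmf lam \<subseteq> {m. \<forall>j. j \<noteq> i \<longrightarrow> m j \<in> S j} \<and>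
        (\<forall>x' \<in> M i. exp_payoff g u \<theta> i lam x' \<le> exp_payoff g u \<theta> i lam x)}"

definition br_op ::
  "('i \<Rightarrow> 'm set) \<Rightarrow> (('i \<Rightarrow> 'm) \<Rightarrow> 'z pmf) \<Rightarrow> ('i \<Rightarrow> 'z \<Rightarrow> 's \<Rightarrow> real) \<Rightarrow> 's
     \<Rightarrow> ('i \<Rightarrow> 'm set) \<Rightarrow> ('i \<Rightarrow> 'm set)" where
  "br_op M g u \<theta> S = (\<lambda>i. best_resp M g u \<theta> S i)"

definition rat_set ::
  "('i \<Rightarrow> 'm set) \<Rightarrow> (('i \<Rightarrow> 'm) \<Rightarrow> 'z pmf) \<Rightarrow> ('i \<Rightarrow> 'z \<Rightarrow> 's \<Rightarrow> real) \<Rightarrow> 's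
     \<Rightarrow> ('i \<Rightarrow> 'm set)" where
  "rat_set M g u \<theta> = gfp (br_op M g u \<theta>)"

definition rat_implements ::
  "('i \<Rightarrow> 'm set) \<Rightarrow> (('i \<Rightarrow> 'm) \<Rightarrow> 'z pmf) \<Rightarrow> ('i \<Rightarrow> 'z \<Rightarrow> 's \<Rightarrow> real) \<Rightarrow> ('s \<Rightarrow> 'z) \<Rightarrow> bool" where
  "rat_implements M g u f \<longleftrightarrow>
     (\<forall>\<theta>. g ` {m. \<forall>i. m i \<in> rat_set M g u \<theta> i} = {return_pmf (f \<theta>)})"

end

theory Submission
  imports Defs
begin

lemma br_mono: "mono (br_op M g u \<theta>)"
  unfolding mono_def br_op_def best_resp_def le_fun_def
  by blast

lemma exp_cong:
  assumes "\<And>m. m \<in> set_pmf lam \<Longrightarrow> g (m(i := x)) = g (m(i := y))"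
  shows "exp_payoff g u \<theta> i lam x = exp_payoff g u \<theta> i lam y"
  unfolding exp_payoff_def
  by (rule integral_cong_AE) (auto intro!: AE_pmfI simp: assms)

theorem lemma1:
  fixes M :: "'i::finite \<Rightarrow> 'm::countable set"
    and g :: "('i \<Rightarrow> 'm) \<Rightarrow> 'z::countable pmf"
    and u :: "'i \<Rightarrow> 'z \<Rightarrow> 's::finite \<Rightarrow> real"
    and f :: "'s \<Rightarrow> 'z"
  assumes "CARD('i) \<ge> 3"
    and "card (range f) \<ge> 2"
    and "rat_implements M g u f"
    and "\<forall>i. rat_set M g u \<theta> i \<subseteq> rat_set M g u \<theta>' i"
  shows "\<forall>i. rat_set M g u \<theta> i = rat_set M g u \<theta>' i"
proof -
  define S where "S = rat_set M g u \<theta>"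
  define T where "T = rat_set M g u \<theta>'"
  have ST: "\<And>i. S i \<subseteq> T i" using assms(4) unfolding S_def T_def by blast
  have fixS: "S \<le> br_op M g u \<theta> S"
    unfolding S_def rat_set_def by (metis gfp_unfold[OF br_mono] order_refl)
  have fixT: "T \<le> br_op M g u \<theta>' T"
    unfolding T_def rat_set_def by (metis gfp_unfold[OF br_mono] order_refl)
  have imS: "g ` {m. \<forall>i. m i \<in> S i} = {return_pmf (f \<theta>)}"
    using assms(3) unfolding rat_implements_def S_def by blast
  have imT: "g ` {m. \<forall>i. m i \<in> T i} = {return_pmf (f \<theta>')}"
    using assms(3) unfolding rat_implements_def T_def by blast
  obtain m0 where m0: "\<forall>i. m0 i \<in> S i" using imS by auto
  have "g m0 = return_pmf (f \<theta>)" using imS m0 by blast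
  moreover have "g m0 = return_pmf (f \<theta>')" using imT m0 ST by blast
  ultimately have eqf: "return_pmf (f \<theta>') = return_pmf (f \<theta>)" by simp
  have gT: "g m = return_pmf (f \<theta>)" if "\<forall>i. m i \<in> T i" for m
  proof -
    have "g m \<in> g ` {m. \<forall>i. m i \<in> T i}" using that by blast
    thus ?thesis using imT eqf by simp
  qed
  have "T \<le> br_op M g u \<theta> T"
  proof (unfold le_fun_def, intro allI subsetI)
    fix i x assume x: "x \<in> T i"
    have xM: "x \<in> M i" using fixT x unfolding le_fun_def br_op_def best_resp_def by blast
    have "m0 i \<in> best_resp M g u \<theta> S i" using fixS m0 unfolding le_fun_def br_op_def by blast
    then obtain lam where lam: "set_pmf lam \<subseteq> {m. \<forall>j. j \<noteq> i \<longrightarrow> m j \<in> S j}"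
      and best: "\<forall>x' \<in> M i. exp_payoff g u \<theta> i lam x' \<le> exp_payoff g u \<theta> i lam (m0 i)"
      unfolding best_resp_def by blast
    have eq: "exp_payoff g u \<theta> i lam x = exp_payoff g u \<theta> i lam (m0 i)"
    proof (rule exp_cong)
      fix m assume "m \<in> set_pmf lam"
      hence mS: "\<forall>j. j \<noteq> i \<longrightarrow> m j \<in> S j" using lam by blast
      have "g (m(i := x)) = return_pmf (f \<theta>)"
        by (rule gT) (use mS ST x in auto)
      moreover have "g (m(i := m0 i)) = return_pmf (f \<theta>)"
        by (rule gT) (use mS ST m0 in auto)
      ultimately show "g (m(i := x)) = g (m(i := m0 i))" by simp
    qed
    have "set_pmf lam \<subseteq> {m. \<forall>j. j \<noteq> i \<longrightarrow> m j \<in> T j}" using lam ST by blast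
    then show "x \<in> br_op M g u \<theta> T i"
      unfolding br_op_def best_resp_def using xM best eq by (intro CollectI conjI exI[of _ lam]) auto
  qed
  hence "T \<le> S" unfolding S_def rat_set_def by (rule gfp_upperbound)
  thus ?thesis using ST unfolding S_def T_def le_fun_def by blast
qed

end
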